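(* Let $V$ be a real vector space, $R:V\to\mathbb{R}\cup\{+\infty\}$ and $f:\mathbb{R}^m\to\mathbb{R}\cup\{+\infty\}$ convex, $\Phi:V\to\mathbb{R}^m$ linear, and let $p$ be a minimizer of $R+f\circ\Phi$ with finite minimal value $M=R(p)+f(\Phi p)$. Let $\mathrm{epi}(R)=\{(u,r)\in V\times\mathbb{R}: R(u)\le r\}$ and $\mathrm{hypo}(M-f\circ\Phi)=\{(u,r)\in V\times\mathbb{R}: M-f(\Phi u)\ge r\}$; the point $(p,R(p))$ lies in both. Let $\vec E$ and $\vec H$ be the linear subspaces of $V\times\mathbb{R}$ parallel to the affine hulls of $F((p,R(p)),\mathrm{epi}(R))$ and $F((p,R(p)),\mathrm{hypo}(M-f\circ\Phi))$ respectively. Then $\mathrm{codim}_{V\times\mathbb{R}}(\vec E+\vec H)\ge 1$. If moreover both faces $F((p,R(p)),\mathrm{epi}(R))$ and $F((p,R(p)),\mathrm{hypo}(M-f\circ\Phi))$ are horizontal and ($R(p)>\inf_V R$ or $f(\Phi p)>\inf_V f\circ\Phi$), then $\mathrm{codim}_{V\times\mathbb{R}}(\vec E+\vec H)\ge 2$.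
   Context: For a convex set $C$, a face is a convex subset $F\subseteq C$ such that every open segment $]x,y[=\{tx+(1-t)y:0<t<1\}$ ($x\neq y$) contained in $C$ which intersects $F$ is contained in $F$; $F(x,C)$ denotes the intersection of all faces of $C$ containing $x$. For a convex set $C\subseteq V\times\mathbb{R}$ and $(x,r)\in C$, the face $F((x,r),C)$ is horizontal if its affine hull is contained in $V\times\{r\}$, and oblique otherwise. *)

theory Defs
  imports "HOL-Analysis.Analysis"
begin

definition is_face :: "'a::real_vector set \<Rightarrow> 'a set \<Rightarrow> bool" where
  "is_face C F \<longleftrightarrow> F \<subseteq> C \<and> convex F \<and>
     (\<forall>x y. x \<noteq> y \<longrightarrow> open_segment x y \<subseteq> C \<longrightarrow> open_segment x y \<inter> F \<noteq> {}
            \<longrightarrow> open_segment x y \<subseteq> F)"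

definition minface :: "'a::real_vector \<Rightarrow> 'a set \<Rightarrow> 'a set" where
  "minface x C = \<Inter>{F. is_face C F \<and> x \<in> F}"

definition direction :: "'a::real_vector set \<Rightarrow> 'a set" where
  "direction S = {a - b | a b. a \<in> affine hull S \<and> b \<in> affine hull S}"

definition horizontal :: "('v::real_vector \<times> real) set \<Rightarrow> real \<Rightarrow> bool" where
  "horizontal F r \<longleftrightarrow> affine hull F \<subseteq> {z. snd z = r}"

text \<open>Codimension at least k of a linear subspace S of the ambient space:
  the quotient space has dimension \<ge> k, i.e. there are k linearly independent vectors
  whose span meets S only in 0.\<close>
definition codim_ge :: "nat \<Rightarrow> 'a::real_vector set \<Rightarrow> bool" where
  "codim_ge k S \<longleftrightarrow> (\<exists>B. finite B \<and> card B = k \<and> independent B \<and> span B \<inter> S = {0})"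

definition set_sum :: "'a::real_vector set \<Rightarrow> 'a set \<Rightarrow> 'a set" where
  "set_sum A B = {a + b | a b. a \<in> A \<and> b \<in> B}"

definition epi :: "('v \<Rightarrow> ereal) \<Rightarrow> ('v \<times> real) set" where
  "epi R = {(u, r). R u \<le> ereal r}"

definition hypo :: "('v \<Rightarrow> ereal) \<Rightarrow> ('v \<times> real) set" where
  "hypo g = {(u, r). g u \<ge> ereal r}"

definition ext_convex :: "('a::real_vector \<Rightarrow> ereal) \<Rightarrow> bool" where
  "ext_convex g \<longleftrightarrow> convex {(u, r::real). g u \<le> ereal r}"

end

theory Submission
  imports Defs
begin

lemma shrink:
  assumes "convex F" "x \<in> F" "x + e *\<^sub>R d \<in> F" "0 \<le> s" "s \<le> e"
  shows "x + s *\<^sub>R d \<in> F"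
proof (cases "e = 0")
  case True then show ?thesis using assms by simp
next
  case False
  hence ep: "e > 0" using assms by simp
  have "(1 - s/e) *\<^sub>R x + (s/e) *\<^sub>R (x + e *\<^sub>R d) \<in> F"
    using assms ep by (intro convexD) (auto simp: field_simps)
  moreover have "(1 - s/e) *\<^sub>R x + (s/e) *\<^sub>R (x + e *\<^sub>R d) = x + s *\<^sub>R d"
    using ep by (simp add: algebra_simps)
  ultimately show ?thesis by simp
qed

lemma id3: "(x::'a::real_vector) + (g * e * m) *\<^sub>R (x - w) = (1 - g * e * (1 - m) - g) *\<^sub>R x + g *\<^sub>R (x + e *\<^sub>R (x - (m *\<^sub>R w + (1 - m) *\<^sub>R q))) + (g * e * (1 - m)) *\<^sub>R q"
  by (simp add: scaleR_right_diff_distrib scaleR_add_right scaleR_diff_left scaleR_add_left algebra_simps)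

lemma G_convex:
  fixes C :: "'a::real_vector set"
  assumes C: "convex C" and x: "x \<in> C"
  shows "convex {y \<in> C. \<exists>e>0. x + e *\<^sub>R (x - y) \<in> C}"
  unfolding convex_def
proof (intro ballI allI impI)
  fix y1 y2 and u v :: real
  assume y1: "y1 \<in> {y \<in> C. \<exists>e>0. x + e *\<^sub>R (x - y) \<in> C}" and y2: "y2 \<in> {y \<in> C. \<exists>e>0. x + e *\<^sub>R (x - y) \<in> C}"
    and uv: "0 \<le> u" "0 \<le> v" "u + v = 1"
  obtain e1 where e1: "e1 > 0" "x + e1 *\<^sub>R (x - y1) \<in> C" "y1 \<in> C" using y1 by auto
  obtain e2 where e2: "e2 > 0" "x + e2 *\<^sub>R (x - y2) \<in> C" "y2 \<in> C" using y2 by auto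
  define e where "e = min e1 e2"
  have ep: "e > 0" using e1 e2 by (simp add: e_def)
  have a1: "x + e *\<^sub>R (x - y1) \<in> C" by (rule shrink[OF C x e1(2)]) (use ep in \<open>auto simp: e_def\<close>)
  have a2: "x + e *\<^sub>R (x - y2) \<in> C" by (rule shrink[OF C x e2(2)]) (use ep in \<open>auto simp: e_def\<close>)
  have "u *\<^sub>R (x + e *\<^sub>R (x - y1)) + v *\<^sub>R (x + e *\<^sub>R (x - y2)) \<in> C"
    using uv a1 a2 by (intro convexD[OF C]) auto
  moreover have "u *\<^sub>R (x + e *\<^sub>R (x - y1)) + v *\<^sub>R (x + e *\<^sub>R (x - y2))
      = (u + v) *\<^sub>R x + e *\<^sub>R ((u + v) *\<^sub>R x - (u *\<^sub>R y1 + v *\<^sub>R y2))"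
    by (simp add: algebra_simps)
  ultimately have "x + e *\<^sub>R (x - (u *\<^sub>R y1 + v *\<^sub>R y2)) \<in> C" using uv by simp
  moreover have "u *\<^sub>R y1 + v *\<^sub>R y2 \<in> C" using uv e1 e2 by (intro convexD[OF C]) auto
  ultimately show "u *\<^sub>R y1 + v *\<^sub>R y2 \<in> {y \<in> C. \<exists>e>0. x + e *\<^sub>R (x - y) \<in> C}" using ep by auto
qed

lemma G_face_step:
  fixes C :: "'a::real_vector set"
  assumes C: "convex C" and x: "x \<in> C"
    and ab: "open_segment a b \<subseteq> C" and z: "z \<in> open_segment a b" and ze: "e > 0" "x + e *\<^sub>R (x - z) \<in> C"
    and w: "w \<in> open_segment a b"
  shows "\<exists>d>0. x + d *\<^sub>R (x - w) \<in> C"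
proof -
  obtain s where s: "0 < s" "s < 1" "z = (1 - s) *\<^sub>R a + s *\<^sub>R b" "a \<noteq> b" using z by (auto simp: in_segment)
  obtain t where t: "0 < t" "t < 1" "w = (1 - t) *\<^sub>R a + t *\<^sub>R b" using w by (auto simp: in_segment)
  define m where "m = min s (1 - s) / 2"
  have m: "0 < m" "m < s" "m < 1 - s" "m < 1" using s by (auto simp: m_def)
  define r where "r = (s - m * t) / (1 - m)"
  have hr: "(1 - m) * r = s - m * t" using m by (simp add: r_def)
  have "m * t < m * 1" using m t by (intro mult_strict_left_mono) auto
  hence "m * t < s" using m by linarith
  hence r0: "r > 0" using m by (simp add: r_def)
  have "m * (1 - t) < m * 1" using m t by (intro mult_strict_left_mono) auto
  hence "m * (1 - t) < 1 - s" using m by linarith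
  hence r1: "r < 1" using m by (simp add: r_def field_simps)
  define q where "q = (1 - r) *\<^sub>R a + r *\<^sub>R b"
  have "q \<in> open_segment a b" unfolding q_def in_segment using r0 r1 s(4) by blast
  hence qC: "q \<in> C" using ab by blast
  have "m *\<^sub>R w + (1 - m) *\<^sub>R q = (m * (1 - t) + ((1 - m) - (1 - m) * r)) *\<^sub>R a + (m * t + (1 - m) * r) *\<^sub>R b"
    unfolding q_def t(3) by (simp add: algebra_simps)
  also have "\<dots> = z" unfolding hr s(3) by (simp add: algebra_simps)
  finally have zq: "z = m *\<^sub>R w + (1 - m) *\<^sub>R q" by simp
  define g where "g = 1 / (2 * (1 + e))"
  define c where "c = g * e"
  have g0: "g > 0" using ze by (simp add: g_def)
  have cg: "c + g = 1/2" using ze by (simp add: c_def g_def field_simps)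
  have c0: "c > 0" using g0 ze by (simp add: c_def)
  have id: "x + (c * m) *\<^sub>R (x - w) = (1 - c * (1 - m) - g) *\<^sub>R x + g *\<^sub>R (x + e *\<^sub>R (x - z)) + (c * (1 - m)) *\<^sub>R q"
    unfolding zq c_def by (rule id3)
  have "convex hull {x, x + e *\<^sub>R (x - z), q} \<subseteq> C"
    using x ze qC C by (intro hull_minimal) auto
  moreover have "(1 - c * (1 - m) - g) *\<^sub>R x + g *\<^sub>R (x + e *\<^sub>R (x - z)) + (c * (1 - m)) *\<^sub>R q \<in> convex hull {x, x + e *\<^sub>R (x - z), q}"
    unfolding convex_hull_3
  proof (intro CollectI exI conjI)
    show "0 \<le> 1 - c * (1 - m) - g" proof -
      have "c * (1 - m) \<le> c * 1" using c0 m by (intro mult_left_mono) auto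
      thus ?thesis using cg by linarith
    qed
  qed (use g0 c0 m in auto)
  ultimately show ?thesis using id c0 m by (intro exI[of _ "c * m"]) auto
qed

lemma G_face:
  fixes C :: "'a::real_vector set"
  assumes C: "convex C" and x: "x \<in> C"
  shows "is_face C {y \<in> C. \<exists>e>0. x + e *\<^sub>R (x - y) \<in> C}"
  unfolding is_face_def
proof (intro conjI allI impI)
  show "{y \<in> C. \<exists>e>0. x + e *\<^sub>R (x - y) \<in> C} \<subseteq> C" by auto
  show "convex {y \<in> C. \<exists>e>0. x + e *\<^sub>R (x - y) \<in> C}" by (rule G_convex[OF C x])
  fix a b
  assume ab: "open_segment a b \<subseteq> C" and ne: "open_segment a b \<inter> {y \<in> C. \<exists>e>0. x + e *\<^sub>R (x - y) \<in> C} \<noteq> {}"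
  then obtain z e where z: "z \<in> open_segment a b" "e > 0" "x + e *\<^sub>R (x - z) \<in> C" by blast
  show "open_segment a b \<subseteq> {y \<in> C. \<exists>e>0. x + e *\<^sub>R (x - y) \<in> C}"
  proof
    fix w assume w: "w \<in> open_segment a b"
    then show "w \<in> {y \<in> C. \<exists>e>0. x + e *\<^sub>R (x - y) \<in> C}"
      using G_face_step[OF C x ab z w] ab by blast
  qed
qed

lemma x_in_minface: "x \<in> minface x C"
  unfolding minface_def by auto

lemma minface_convex: "convex (minface x C)"
  unfolding minface_def by (rule convex_Inter) (auto simp: is_face_def)

lemma minface_ext:
  fixes C :: "'a::real_vector set"
  assumes C: "convex C" and x: "x \<in> C" and y: "y \<in> minface x C"
  shows "\<exists>e>0. x + e *\<^sub>R (x - y) \<in> minface x C"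
proof -
  have "is_face C {y \<in> C. \<exists>e>0. x + e *\<^sub>R (x - y) \<in> C}" by (rule G_face[OF C x])
  moreover have "x \<in> {y \<in> C. \<exists>e>0. x + e *\<^sub>R (x - y) \<in> C}" using x by (auto intro: exI[of _ 1])
  ultimately have "minface x C \<subseteq> {y \<in> C. \<exists>e>0. x + e *\<^sub>R (x - y) \<in> C}"
    unfolding minface_def by blast
  with y obtain e where yC: "y \<in> C" and e: "e > 0" "x + e *\<^sub>R (x - y) \<in> C" by blast
  show ?thesis
  proof (cases "y = x")
    case True then show ?thesis using x_in_minface[of x C] by (auto intro: exI[of _ 1])
  next
    case False
    define z where "z = x + e *\<^sub>R (x - y)"
    have yz: "y \<noteq> z"
    proof
      assume "y = z"
      hence "(1 + e) *\<^sub>R (x - y) = 0" by (simp add: z_def algebra_simps)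
      thus False using e False by simp
    qed
    have segC: "open_segment y z \<subseteq> C"
      using closed_segment_subset[OF yC e(2)[folded z_def] C] open_closed_segment by blast
    have lin: "(1 - u) *\<^sub>R y + u *\<^sub>R z = (1 - u * (1 + e)) *\<^sub>R y + (u * (1 + e)) *\<^sub>R x" for u
      by (simp add: z_def algebra_simps)
    define u where "u = 1 / (1 + e)"
    have u: "0 < u" "u < 1" "u * (1 + e) = 1" using e by (auto simp: u_def field_simps)
    have "x = (1 - u) *\<^sub>R y + u *\<^sub>R z" unfolding lin u(3) by simp
    hence xseg: "x \<in> open_segment y z" unfolding in_segment using u yz by blast
    define u' where "u' = (1 + e/2) / (1 + e)"
    have u': "0 < u'" "u' < 1" "u' * (1 + e) = 1 + e/2" using e by (auto simp: u'_def field_simps)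
    have "x + (e/2) *\<^sub>R (x - y) = (1 - u') *\<^sub>R y + u' *\<^sub>R z" unfolding lin u'(3)
      by (simp add: algebra_simps)
    hence pseg: "x + (e/2) *\<^sub>R (x - y) \<in> open_segment y z" unfolding in_segment using u' yz by blast
    have "x + (e/2) *\<^sub>R (x - y) \<in> F" if F: "is_face C F" "x \<in> F" for F
    proof -
      have "open_segment y z \<subseteq> F" using F segC xseg yz unfolding is_face_def by blast
      thus ?thesis using pseg by blast
    qed
    hence "x + (e/2) *\<^sub>R (x - y) \<in> minface x C" unfolding minface_def by blast
    thus ?thesis using e by (intro exI[of _ "e/2"]) auto
  qed
qed

definition good :: "'a::real_vector set \<Rightarrow> 'a \<Rightarrow> 'a \<Rightarrow> bool" where
  "good F x d \<longleftrightarrow> (\<exists>e>0. \<forall>s. \<bar>s\<bar> \<le> e \<longrightarrow> x + s *\<^sub>R d \<in> F)"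

lemma good_subspace:
  assumes F: "convex F" and x: "x \<in> F"
  shows "subspace {d. good F x d}"
  unfolding subspace_def
proof (intro conjI ballI allI)
  show "0 \<in> {d. good F x d}" using x by (auto simp: good_def intro: exI[of _ 1])
next
  fix d1 d2 assume "d1 \<in> {d. good F x d}" "d2 \<in> {d. good F x d}"
  then obtain e1 e2 where e1: "e1 > 0" "\<forall>s. \<bar>s\<bar> \<le> e1 \<longrightarrow> x + s *\<^sub>R d1 \<in> F"
    and e2: "e2 > 0" "\<forall>s. \<bar>s\<bar> \<le> e2 \<longrightarrow> x + s *\<^sub>R d2 \<in> F" by (auto simp: good_def)
  have "x + s *\<^sub>R (d1 + d2) \<in> F" if s: "\<bar>s\<bar> \<le> min e1 e2 / 2" for s
  proof -
    have "(1/2) *\<^sub>R (x + (2 * s) *\<^sub>R d1) + (1/2) *\<^sub>R (x + (2 * s) *\<^sub>R d2) \<in> F"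
      using s e1 e2 by (intro convexD[OF F]) auto
    moreover have "(1/2) *\<^sub>R (x + (2 * s) *\<^sub>R d1) + (1/2) *\<^sub>R (x + (2 * s) *\<^sub>R d2) = x + s *\<^sub>R (d1 + d2)"
      by (simp add: algebra_simps flip: scaleR_add_left)
    ultimately show ?thesis by simp
  qed
  thus "d1 + d2 \<in> {d. good F x d}" using e1 e2 unfolding good_def
    by (intro CollectI exI[of _ "min e1 e2 / 2"]) auto
next
  fix c :: real and d assume "d \<in> {d. good F x d}"
  then obtain e where e: "e > 0" "\<forall>s. \<bar>s\<bar> \<le> e \<longrightarrow> x + s *\<^sub>R d \<in> F" by (auto simp: good_def)
  show "c *\<^sub>R d \<in> {d. good F x d}"
  proof (cases "c = 0")
    case True then show ?thesis using x by (auto simp: good_def intro: exI[of _ 1])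
  next
    case False
    have "x + s *\<^sub>R (c *\<^sub>R d) \<in> F" if s: "\<bar>s\<bar> \<le> e / \<bar>c\<bar>" for s
    proof -
      have "\<bar>s * c\<bar> \<le> e" using s False by (simp add: abs_mult field_simps)
      thus ?thesis using e by simp
    qed
    thus ?thesis using e False unfolding good_def by (intro CollectI exI[of _ "e / \<bar>c\<bar>"]) auto
  qed
qed

lemma good_diff:
  fixes C :: "'a::real_vector set"
  assumes C: "convex C" and x: "x \<in> C" and y: "y \<in> minface x C"
  shows "good (minface x C) x (y - x)"
proof -
  obtain e where e: "e > 0" "x + e *\<^sub>R (x - y) \<in> minface x C" using minface_ext[OF C x y] by blast
  have F: "convex (minface x C)" "x \<in> minface x C" by (rule minface_convex, rule x_in_minface)
  have y1: "x + 1 *\<^sub>R (y - x) \<in> minface x C" using y by simp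
  have "x + s *\<^sub>R (y - x) \<in> minface x C" if s: "\<bar>s\<bar> \<le> min e 1" for s
  proof (cases "s \<ge> 0")
    case True then show ?thesis using shrink[OF F y1, of s] s by auto
  next
    case False
    have eq: "x + (-s) *\<^sub>R (x - y) = x + s *\<^sub>R (y - x)" by (simp add: algebra_simps)
    have "x + (-s) *\<^sub>R (x - y) \<in> minface x C" using shrink[OF F e(2), of "-s"] s False by auto
    thus ?thesis unfolding eq .
  qed
  thus ?thesis unfolding good_def using e by (intro exI[of _ "min e 1"]) auto
qed

lemma dir_good:
  fixes C :: "'a::real_vector set"
  assumes C: "convex C" and x: "x \<in> C" and d: "d \<in> direction (minface x C)"
  shows "good (minface x C) x d"
proof -
  let ?F = "minface x C"
  have sub: "span ((\<lambda>y. -x + y) ` (?F - {x})) \<subseteq> {d. good ?F x d}"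
  proof (rule span_minimal)
    show "(\<lambda>y. -x + y) ` (?F - {x}) \<subseteq> {d. good ?F x d}"
      using good_diff[OF C x] by auto
    show "subspace {d. good ?F x d}" by (rule good_subspace[OF minface_convex x_in_minface])
  qed
  obtain a b where ab: "d = a - b" "a \<in> affine hull ?F" "b \<in> affine hull ?F"
    using d unfolding direction_def by blast
  note ah = affine_hull_span2[OF x_in_minface[of x C]]
  obtain v1 where v1: "a = x + v1" "v1 \<in> span ((\<lambda>y. -x + y) ` (?F - {x}))" using ab(2) unfolding ah by blast
  obtain v2 where v2: "b = x + v2" "v2 \<in> span ((\<lambda>y. -x + y) ` (?F - {x}))" using ab(3) unfolding ah by blast
  have "d = v1 - v2" using ab v1 v2 by simp
  moreover have "v1 - v2 \<in> span ((\<lambda>y. -x + y) ` (?F - {x}))" using v1 v2 by (intro span_diff)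
  ultimately show ?thesis using sub by blast
qed

lemma minface_sub:
  assumes "convex C" "x \<in> C"
  shows "minface x C \<subseteq> C"
proof -
  have "is_face C C" using assms unfolding is_face_def by auto
  thus ?thesis using assms unfolding minface_def by blast
qed

lemma dir_zero: "x \<in> F \<Longrightarrow> 0 \<in> direction F"
  unfolding direction_def using hull_inc[of x F] by (auto intro!: exI[of _ x])

lemma dir_scale:
  assumes "d \<in> direction F" shows "c *\<^sub>R d \<in> direction F"
proof -
  obtain a b where ab: "d = a - b" "a \<in> affine hull F" "b \<in> affine hull F"
    using assms unfolding direction_def by blast
  have "(1 - c) *\<^sub>R b + c *\<^sub>R a \<in> affine hull F"
    using ab affine_affine_hull[of F] unfolding affine_def by auto
  moreover have "c *\<^sub>R d = ((1 - c) *\<^sub>R b + c *\<^sub>R a) - b" unfolding ab(1) by (simp add: algebra_simps)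
  ultimately show ?thesis using ab unfolding direction_def by blast
qed

lemma set_sum_scale:
  assumes "z \<in> set_sum (direction E) (direction H)"
  shows "c *\<^sub>R z \<in> set_sum (direction E) (direction H)"
  using assms dir_scale unfolding set_sum_def by (fastforce simp: scaleR_add_right)

lemma dir_horiz:
  assumes "horizontal F r" "d \<in> direction F" shows "snd d = 0"
proof -
  obtain a b where ab: "d = a - b" "a \<in> affine hull F" "b \<in> affine hull F"
    using assms(2) unfolding direction_def by blast
  have "snd a = r" "snd b = r" using ab assms(1) unfolding horizontal_def by auto
  thus ?thesis using ab by simp
qed

lemma codim2:
  fixes S :: "('v::real_vector \<times> real) set"
  assumes w: "w \<noteq> 0" and S0: "0 \<in> S" and Ssnd: "\<forall>z\<in>S. snd z = 0"
    and Sscale: "\<forall>z\<in>S. \<forall>c. c *\<^sub>R z \<in> S" and wS: "(w, 0) \<notin> S"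
  shows "codim_ge 2 S"
  unfolding codim_ge_def
proof (intro exI[of _ "{(0, 1), (w, 0)}"] conjI)
  show "finite {(0::'v, 1::real), (w, 0)}" by simp
  show "card {(0::'v, 1::real), (w, 0)} = 2" by simp
  have sp: "span {(w, 0::real)} = range (\<lambda>k. (k *\<^sub>R w, 0))"
    by (auto simp: span_singleton)
  show "independent {(0::'v, 1::real), (w, 0)}"
    using w by (auto simp: independent_insert sp zero_prod_def)
  show "span {(0::'v, 1::real), (w, 0)} \<inter> S = {0}"
  proof
    show "{0} \<subseteq> span {(0::'v, 1::real), (w, 0)} \<inter> S" using S0 by (auto simp: span_zero)
    show "span {(0::'v, 1::real), (w, 0)} \<inter> S \<subseteq> {0}"
    proof
      fix v assume v: "v \<in> span {(0::'v, 1::real), (w, 0)} \<inter> S"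
      then obtain k j where kj: "v - k *\<^sub>R (0, 1) = (j *\<^sub>R w, 0)"
        unfolding span_insert sp by auto
      have vS: "v \<in> S" using v by blast
      have v_eq: "v = (j *\<^sub>R w, k)" using kj by (cases v) auto
      hence "k = 0" using Ssnd vS by auto
      with v_eq have v2: "v = (j *\<^sub>R w, 0)" by simp
      show "v \<in> {0}"
      proof (cases "j = 0")
        case True thus ?thesis using v2 by (simp add: zero_prod_def)
      next
        case False
        have "(1/j) *\<^sub>R v \<in> S" using Sscale vS by blast
        moreover have "(1/j) *\<^sub>R v = (w, 0)" using v2 False by simp
        ultimately show ?thesis using wS by simp
      qed
    qed
  qed
qed

lemma mix:
  fixes A :: "('v::real_vector \<times> real) set"
  assumes A: "convex A" and X: "(u, ru) \<in> A" and e1: "\<epsilon>1 > 0" "\<forall>s. \<bar>s\<bar> \<le> \<epsilon>1 \<longrightarrow> (p + s *\<^sub>R e, rp) \<in> A"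
    and e2: "\<epsilon>2 > 0"
  shows "\<exists>l. 0 < l \<and> l \<le> \<epsilon>2 \<and> (p + l *\<^sub>R (u - p - e), l * ru + (1 - l) * rp) \<in> A"
proof -
  define l where "l = min \<epsilon>2 (min (\<epsilon>1 / (1 + \<epsilon>1)) (1/2))"
  have l: "0 < l" "l \<le> \<epsilon>2" "l < 1" "l \<le> \<epsilon>1 / (1 + \<epsilon>1)" using e1 e2 by (auto simp: l_def)
  define \<sigma> where "\<sigma> = l / (1 - l)"
  have hs: "(1 - l) * \<sigma> = l" using l by (simp add: \<sigma>_def)
  have "l * (1 + \<epsilon>1) \<le> \<epsilon>1" using l(4) e1 by (simp add: field_simps)
  hence "\<sigma> \<le> \<epsilon>1" using l by (simp add: \<sigma>_def field_simps)
  moreover have "\<sigma> \<ge> 0" using l by (simp add: \<sigma>_def)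
  ultimately have "\<bar>-\<sigma>\<bar> \<le> \<epsilon>1" by simp
  hence "(p + (-\<sigma>) *\<^sub>R e, rp) \<in> A" using e1(2) by blast
  hence "l *\<^sub>R (u, ru) + (1 - l) *\<^sub>R (p + (-\<sigma>) *\<^sub>R e, rp) \<in> A"
    using X l by (intro convexD[OF A]) auto
  moreover have "(1 - l) *\<^sub>R (p + (-\<sigma>) *\<^sub>R e) = (1 - l) *\<^sub>R p - ((1 - l) * \<sigma>) *\<^sub>R e"
    by (simp add: algebra_simps)
  hence "l *\<^sub>R u + (1 - l) *\<^sub>R (p + (-\<sigma>) *\<^sub>R e) = p + l *\<^sub>R (u - p - e)"
    unfolding hs by (simp add: algebra_simps)
  ultimately show ?thesis using l by (intro exI[of _ l]) auto
qed

theorem mainTheorem4: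
  fixes R :: "'v::real_vector \<Rightarrow> ereal"
    and f :: "real^'m \<Rightarrow> ereal"
    and \<Phi> :: "'v \<Rightarrow> real^'m"
    and p :: 'v and M :: real
  assumes R_val: "\<forall>u. R u \<noteq> -\<infinity>" and f_val: "\<forall>y. f y \<noteq> -\<infinity>"
    and R_conv: "ext_convex R" and f_conv: "ext_convex f"
    and lin: "linear \<Phi>"
    and minim: "\<forall>u. R p + f (\<Phi> p) \<le> R u + f (\<Phi> u)"
    and M_def: "ereal M = R p + f (\<Phi> p)"
  shows "codim_ge 1 (set_sum (direction (minface (p, real_of_ereal (R p)) (epi R)))
                             (direction (minface (p, real_of_ereal (R p)) (hypo (\<lambda>u. ereal M - f (\<Phi> u))))))
    \<and> ((horizontal (minface (p, real_of_ereal (R p)) (epi R)) (real_of_ereal (R p))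
         \<and> horizontal (minface (p, real_of_ereal (R p)) (hypo (\<lambda>u. ereal M - f (\<Phi> u)))) (real_of_ereal (R p))
         \<and> (R p > (INF u. R u) \<or> f (\<Phi> p) > (INF u. f (\<Phi> u))))
       \<longrightarrow> codim_ge 2 (set_sum (direction (minface (p, real_of_ereal (R p)) (epi R)))
                             (direction (minface (p, real_of_ereal (R p)) (hypo (\<lambda>u. ereal M - f (\<Phi> u)))))))"
proof -
  define rp where "rp = real_of_ereal (R p)"
  define g where "g = (\<lambda>u. ereal M - f (\<Phi> u))"
  have Rp: "R p = ereal rp" and fp: "f (\<Phi> p) = ereal (M - rp)"
  proof -
    have Rinf: "R p \<noteq> \<infinity>"
    proof
      assume "R p = \<infinity>"
      hence "R p + f (\<Phi> p) = \<infinity>" using f_val by simp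
      with M_def have "ereal M = \<infinity>" by (rule trans)
      thus False by simp
    qed
    have finf: "f (\<Phi> p) \<noteq> \<infinity>"
    proof
      assume "f (\<Phi> p) = \<infinity>"
      hence "R p + f (\<Phi> p) = \<infinity>" using R_val by simp
      with M_def have "ereal M = \<infinity>" by (rule trans)
      thus False by simp
    qed
    show Rp': "R p = ereal rp" unfolding rp_def using Rinf R_val by (cases "R p") auto
    obtain b where b: "f (\<Phi> p) = ereal b" using finf f_val by (cases "f (\<Phi> p)") auto
    have "ereal M = ereal (rp + b)" using M_def Rp' b by simp
    hence "b = M - rp" by simp
    thus "f (\<Phi> p) = ereal (M - rp)" using b by simp
  qed
  have hypo_iff: "(v, r) \<in> hypo g \<longleftrightarrow> f (\<Phi> v) \<le> ereal (M - r)" for v r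
    using f_val by (cases "f (\<Phi> v)") (auto simp: hypo_def g_def)
  have convE: "convex (epi R)" using R_conv unfolding ext_convex_def epi_def .
  have convH: "convex (hypo g)"
  proof (rule convexI)
    fix a b :: "'v \<times> real" and u v :: real
    assume a: "a \<in> hypo g" and b: "b \<in> hypo g" and uv: "0 \<le> u" "0 \<le> v" "u + v = 1"
    obtain a1 a2 b1 b2 where ab: "a = (a1, a2)" "b = (b1, b2)" by (cases a, cases b)
    have "u *\<^sub>R (\<Phi> a1, M - a2) + v *\<^sub>R (\<Phi> b1, M - b2) \<in> {(y, r::real). f y \<le> ereal r}"
      using a b uv f_conv unfolding ext_convex_def ab hypo_iff
      by (intro convexD) auto
    moreover have "u *\<^sub>R (\<Phi> a1, M - a2) + v *\<^sub>R (\<Phi> b1, M - b2) = (\<Phi> (u *\<^sub>R a1 + v *\<^sub>R b1), M - (u * a2 + v * b2))"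
    proof -
      have "\<Phi> (u *\<^sub>R a1 + v *\<^sub>R b1) = u *\<^sub>R \<Phi> a1 + v *\<^sub>R \<Phi> b1"
        using lin by (simp add: linear_add linear_scale)
      moreover have "u * (M - a2) + v * (M - b2) = M - (u * a2 + v * b2)"
      proof -
        have "u * (M - a2) + v * (M - b2) = (u + v) * M - (u * a2 + v * b2)" by (simp add: algebra_simps)
        thus ?thesis using uv(3) by simp
      qed
      ultimately show ?thesis by simp
    qed
    ultimately show "u *\<^sub>R a + v *\<^sub>R b \<in> hypo g" unfolding ab by (simp add: hypo_iff)
  qed
  have contra: False if "(v, r1) \<in> epi R" "(v, r2) \<in> hypo g" "r1 < r2" for v r1 r2
  proof -
    have "R v + f (\<Phi> v) \<le> ereal r1 + ereal (M - r2)"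
      using that by (intro add_mono) (auto simp: epi_def hypo_iff)
    also have "\<dots> < ereal M" using that(3) by simp
    finally have lt: "R v + f (\<Phi> v) < ereal M" .
    have "ereal M \<le> R v + f (\<Phi> v)" using minim M_def by simp
    hence "ereal M < ereal M" using lt by (rule order.strict_trans1)
    thus False by simp
  qed
  have contra': False if "P1 \<in> epi R" "P2 \<in> hypo g" "fst P1 = fst P2" "snd P1 < snd P2" for P1 P2
    using contra[of "fst P1" "snd P1" "snd P2"] that by (cases P1, cases P2) auto
  define X where "X = (p, rp)"
  have XE: "X \<in> epi R" by (simp add: X_def epi_def Rp)
  have XH: "X \<in> hypo g" by (simp add: X_def hypo_iff fp)
  define FE where "FE = minface X (epi R)"
  define FH where "FH = minface X (hypo g)"
  have subE: "FE \<subseteq> epi R" unfolding FE_def by (rule minface_sub[OF convE XE])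
  have subH: "FH \<subseteq> hypo g" unfolding FH_def by (rule minface_sub[OF convH XH])
  have goodE: "\<exists>e>0. \<forall>s. \<bar>s\<bar> \<le> e \<longrightarrow> X + s *\<^sub>R d \<in> FE" if "d \<in> direction FE" for d
    using dir_good[OF convE XE, of d] that unfolding FE_def good_def by blast
  have goodH: "\<exists>e>0. \<forall>s. \<bar>s\<bar> \<le> e \<longrightarrow> X + s *\<^sub>R d \<in> FH" if "d \<in> direction FH" for d
    using dir_good[OF convH XH, of d] that unfolding FH_def good_def by blast
  define S where "S = set_sum (direction FE) (direction FH)"
  have S0: "0 \<in> S" unfolding S_def set_sum_def
    using dir_zero[OF x_in_minface[of X "epi R"]] dir_zero[OF x_in_minface[of X "hypo g"]]
    unfolding FE_def FH_def by (metis (mono_tags, lifting) add.right_neutral mem_Collect_eq)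
  have part1: "codim_ge 1 S"
    unfolding codim_ge_def
  proof (intro exI[of _ "{(0::'v, 1::real)}"] conjI)
    show "finite {(0::'v, 1::real)}" "card {(0::'v, 1::real)} = 1" by auto
    show "independent {(0::'v, 1::real)}" by (simp add: independent_insert zero_prod_def)
    show "span {(0::'v, 1::real)} \<inter> S = {0}"
    proof
      show "{0} \<subseteq> span {(0::'v, 1::real)} \<inter> S" using S0 by (auto simp: span_zero)
      show "span {(0::'v, 1::real)} \<inter> S \<subseteq> {0}"
      proof
        fix v assume v: "v \<in> span {(0::'v, 1::real)} \<inter> S"
        then obtain k where vk: "v = (0, k)" by (auto simp: span_singleton)
        show "v \<in> {0}"
        proof (cases "k = 0")
          case True thus ?thesis using vk by (simp add: zero_prod_def)
        next
          case False
          obtain e h where eh: "e \<in> direction FE" "h \<in> direction FH" "v = e + h"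
            using v unfolding S_def set_sum_def by blast
          obtain eE where eE: "eE > 0" "\<forall>s. \<bar>s\<bar> \<le> eE \<longrightarrow> X + s *\<^sub>R e \<in> FE" using goodE[OF eh(1)] by blast
          obtain eH where eH: "eH > 0" "\<forall>s. \<bar>s\<bar> \<le> eH \<longrightarrow> X + s *\<^sub>R h \<in> FH" using goodH[OF eh(2)] by blast
          define \<sigma> where "\<sigma> = (if k > 0 then min eE eH else - min eE eH)"
          have sk: "\<sigma> * k > 0" using False eE eH by (auto simp: \<sigma>_def mult_pos_neg)
          have "\<bar>-\<sigma>\<bar> \<le> eE" "\<bar>\<sigma>\<bar> \<le> eH" using eE eH by (auto simp: \<sigma>_def)
          hence P1: "X + (-\<sigma>) *\<^sub>R e \<in> epi R" and P2: "X + \<sigma> *\<^sub>R h \<in> hypo g"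
            using eE eH subE subH by blast+
          have fs: "fst e + fst h = 0" "snd e + snd h = k" using eh(3) vk by (auto simp: prod_eq_iff)
          have "fst (X + (-\<sigma>) *\<^sub>R e) = fst (X + \<sigma> *\<^sub>R h)"
          proof -
            have "fst h = - fst e" using fs by (simp add: eq_neg_iff_add_eq_0 add.commute)
            thus ?thesis by simp
          qed
          moreover have "snd (X + (-\<sigma>) *\<^sub>R e) < snd (X + \<sigma> *\<^sub>R h)"
          proof -
            have "\<sigma> * snd e + \<sigma> * snd h > 0" using sk fs by (simp add: distrib_left[symmetric])
            thus ?thesis by simp
          qed
          ultimately show ?thesis using contra'[OF P1 P2] by blast
        qed
      qed
    qed
  qed
  have part2: "codim_ge 2 S"
    if hE: "horizontal FE rp" and hH: "horizontal FH rp"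
      and inf: "R p > (INF u. R u) \<or> f (\<Phi> p) > (INF u. f (\<Phi> u))"
  proof -
    have Ssnd: "\<forall>z\<in>S. snd z = 0" unfolding S_def set_sum_def
      using dir_horiz[OF hE] dir_horiz[OF hH] by fastforce
    have Sscale: "\<forall>z\<in>S. \<forall>c. c *\<^sub>R z \<in> S" unfolding S_def using set_sum_scale by blast
    have decomp: "\<exists>e1 h1. w = e1 + h1 \<and> (\<exists>eE>0. \<forall>s. \<bar>s\<bar> \<le> eE \<longrightarrow> (p + s *\<^sub>R e1, rp) \<in> epi R)
         \<and> (\<exists>eH>0. \<forall>s. \<bar>s\<bar> \<le> eH \<longrightarrow> (p + s *\<^sub>R h1, rp) \<in> hypo g)" if wS: "(w, 0) \<in> S" for w
    proof -
      obtain e h where eh: "e \<in> direction FE" "h \<in> direction FH" "(w, 0) = e + h"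
        using wS unfolding S_def set_sum_def by blast
      obtain e1 where e1: "e = (e1, 0)" using dir_horiz[OF hE eh(1)] by (cases e) auto
      obtain h1 where h1: "h = (h1, 0)" using dir_horiz[OF hH eh(2)] by (cases h) auto
      obtain eE where eE: "eE > 0" "\<forall>s. \<bar>s\<bar> \<le> eE \<longrightarrow> X + s *\<^sub>R e \<in> FE" using goodE[OF eh(1)] by blast
      obtain eH where eH: "eH > 0" "\<forall>s. \<bar>s\<bar> \<le> eH \<longrightarrow> X + s *\<^sub>R h \<in> FH" using goodH[OF eh(2)] by blast
      have "\<forall>s. \<bar>s\<bar> \<le> eE \<longrightarrow> (p + s *\<^sub>R e1, rp) \<in> epi R" using eE subE by (auto simp: X_def e1)
      moreover have "\<forall>s. \<bar>s\<bar> \<le> eH \<longrightarrow> (p + s *\<^sub>R h1, rp) \<in> hypo g" using eH subH by (auto simp: X_def h1)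
      moreover have "w = e1 + h1" using eh(3) e1 h1 by simp
      ultimately show ?thesis using eE(1) eH(1) by blast
    qed
    from inf obtain u where u: "R u < R p \<or> f (\<Phi> u) < f (\<Phi> p)" by (auto simp: INF_less_iff)
    hence up: "u - p \<noteq> 0" by auto
    have notin: "(u - p, 0) \<notin> S"
    proof
      assume "(u - p, 0) \<in> S"
      from decomp[OF this] obtain e1 h1 eE eH where d: "u - p = e1 + h1" "eE > 0" "eH > 0"
        "\<forall>s. \<bar>s\<bar> \<le> eE \<longrightarrow> (p + s *\<^sub>R e1, rp) \<in> epi R"
        "\<forall>s. \<bar>s\<bar> \<le> eH \<longrightarrow> (p + s *\<^sub>R h1, rp) \<in> hypo g" by blast
      from u show False
      proof
        assume Ru: "R u < R p"
        obtain ru where ru: "R u = ereal ru" using R_val Ru Rp by (cases "R u") auto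
        have rur: "ru < rp" using Ru ru Rp by simp
        have "(u, ru) \<in> epi R" by (simp add: epi_def ru)
        from mix[OF convE this d(2) d(4) d(3)] obtain l where
          l: "0 < l" "l \<le> eH" "(p + l *\<^sub>R (u - p - e1), l * ru + (1 - l) * rp) \<in> epi R" by blast
        have hh: "u - p - e1 = h1" using d(1) by (simp add: algebra_simps)
        have "(p + l *\<^sub>R h1, rp) \<in> hypo g" using d(5) l by simp
        moreover have "l * ru + (1 - l) * rp < rp"
        proof -
          have "l * ru < l * rp" using l rur by simp
          thus ?thesis by (simp add: algebra_simps)
        qed
        ultimately show False using contra l(3) unfolding hh by blast
      next
        assume fu: "f (\<Phi> u) < f (\<Phi> p)"
        obtain fv where fv: "f (\<Phi> u) = ereal fv" using f_val fu fp by (cases "f (\<Phi> u)") auto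
        have fvr: "fv < M - rp" using fu fv fp by simp
        have "(u, M - fv) \<in> hypo g" by (simp add: hypo_iff fv)
        from mix[OF convH this d(3) d(5) d(2)] obtain l where
          l: "0 < l" "l \<le> eE" "(p + l *\<^sub>R (u - p - h1), l * (M - fv) + (1 - l) * rp) \<in> hypo g" by blast
        have hh: "u - p - h1 = e1" using d(1) by (simp add: algebra_simps)
        have "(p + l *\<^sub>R e1, rp) \<in> epi R" using d(4) l by simp
        moreover have "rp < l * (M - fv) + (1 - l) * rp"
        proof -
          have "l * rp < l * (M - fv)" using l fvr by simp
          thus ?thesis by (simp add: algebra_simps)
        qed
        ultimately show False using contra l(3) unfolding hh by blast
      qed
    qed
    show ?thesis by (rule codim2[OF up S0 Ssnd Sscale notin])
  qed
  have "codim_ge 1 S \<and> (horizontal FE rp \<and> horizontal FH rp \<and> (R p > (INF u. R u) \<or> f (\<Phi> p) > (INF u. f (\<Phi> u))) \<longrightarrow> codim_ge 2 S)"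
    using part1 part2 by blast
  thus ?thesis unfolding S_def FE_def FH_def X_def rp_def g_def .
qed

end
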